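(* For any type distribution $D$, any valuation functions $\{v_i\}_{i\in[n]}$ such that for every bidder $i$ and every type $t_i$ the set function $v_i(t_i,\cdot)$ is monotone and subadditive on $2^{[m]}$, and any Bayes–Nash equilibrium $s$ of the simultaneous all-pay auction (SAP), the tuple $(\mathrm{SAP},s,D,\{v_i\})$ is $\tfrac12$-efficient.
   Context: $n$ bidders, $m$ items; bidder $i$ has type $t_i\sim D_i$ (independent across bidders, $D=\times_iD_i$) and valuation $v_i(t_i,S)\ge0$. A simultaneous auction runs $m$ independent single-item auctions, one per item, on bid vectors $b_i\in(\mathbb R_{\ge0}\cup\{\perp\})^m$ ($\perp$ = abstain, pays nothing for that item); bidder $i$ receives the union of items won, pays the sum of per-item payments $p_i^{(j)}$, utility = value of bundle minus payment. SAP: in each item's auction the highest bidder wins and every bidder pays its bid for that item. Strategies map types to distributions of bid vectors; Bayes–Nash equilibrium (BNE) means no bidder of any type can improve its expected utility by deviating. $\mathrm{Rev}^{(s)}_D(\mathcal A,S)=\sum_i\sum_{j\in S}\mathbb E_{t\sim D,b\sim s(t)}[p_i^{(j)}(b^{(j)})]$. $\mu_i^{(s)}(t_i,S)=\sup_{q_i\in(\mathbb R_{\ge0}\cup\{\perp\})^m}\mathbb E_{t_{-i}\sim D_{-i},b_{-i}\sim s_{-i}(t_{-i})}\big[v_i(t_i,X_i(q_i,b_{-i})\cap S)-\sum_{j\in S}p_i^{(j)}(q_i^{(j)},b_{-i}^{(j)})\big]$, where $X_i$ is the set of items $i$ wins. $c$-efficiency of $(\mathcal A,s,D,\{v_i\})$: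 (1) per-item payments are nonnegative and bidding $\perp$ on an item costs nothing for it; (2) the highest bidder on each item wins it; (3) for all $i,t_i,S\subseteq[m]$: $\mu_i^{(s)}(t_i,S)+\mathrm{Rev}^{(s)}_D(\mathcal A,S)\ge c\,v_i(t_i,S)$. *)

theory Defs
  imports "HOL-Probability.Probability"
begin

text \<open>A bid on a single item is an element of the nonnegative reals or the abstention
  symbol; abstention is None, a bid x is Some x.  A bid vector is a function from items
  to single-item bids; only items 0..m-1 are relevant.\<close>

type_synonym bidvec = "nat \<Rightarrow> real option"

definition bid_item :: "real option measure" where
  "bid_item = vimage_algebra (insert None (Some ` {0..}))
      (\<lambda>ob. case ob of None \<Rightarrow> -1 | Some x \<Rightarrow> x) borel"

definition bid_space :: "nat \<Rightarrow> bidvec measure" where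
  "bid_space m = PiM {..<m} (\<lambda>_. bid_item)"

text \<open>A simultaneous auction format is given by per-item rules:
  alloc j bb = winner (if any) of item j given the bids bb (bidder => bid on item j),
  pay j bb k = payment of bidder k for item j.\<close>

definition highest :: "nat \<Rightarrow> (nat \<Rightarrow> real option) \<Rightarrow> nat set" where
  "highest n bb = {k. k < n \<and> (\<exists>x. bb k = Some x \<and>
                      (\<forall>k' y. k' < n \<longrightarrow> bb k' = Some y \<longrightarrow> y \<le> x))}"

definition sap_alloc :: "(nat \<Rightarrow> nat set \<Rightarrow> nat) \<Rightarrow> nat \<Rightarrow> nat \<Rightarrow> (nat \<Rightarrow> real option) \<Rightarrow> nat option" where
  "sap_alloc tb n j bb = (if highest n bb = {} then None else Some (tb j (highest n bb)))"

definition sap_pay :: "nat \<Rightarrow> (nat \<Rightarrow> real option) \<Rightarrow> nat \<Rightarrow> real" where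
  "sap_pay j bb k = (case bb k of None \<Rightarrow> 0 | Some x \<Rightarrow> x)"

definition joint :: "nat \<Rightarrow> 't measure \<Rightarrow> ('t \<Rightarrow> bidvec measure) \<Rightarrow> ('t \<times> bidvec) measure" where
  "joint m Di si = Giry_Monad.bind Di (\<lambda>t. Giry_Monad.bind (si t)
       (\<lambda>b. return (Di \<Otimes>\<^sub>M bid_space m) (t, b)))"

definition others :: "nat \<Rightarrow> nat \<Rightarrow> (nat \<Rightarrow> 't measure) \<Rightarrow> (nat \<Rightarrow> 't \<Rightarrow> bidvec measure)
                      \<Rightarrow> nat \<Rightarrow> (nat \<Rightarrow> 't \<times> bidvec) measure" where
  "others n m D s i = PiM ({..<n} - {i}) (\<lambda>k. joint m (D k) (s k))"

definition profile :: "nat \<Rightarrow> nat \<Rightarrow> (nat \<Rightarrow> 't measure) \<Rightarrow> (nat \<Rightarrow> 't \<Rightarrow> bidvec measure)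
                      \<Rightarrow> (nat \<Rightarrow> 't \<times> bidvec) measure" where
  "profile n m D s = PiM {..<n} (\<lambda>k. joint m (D k) (s k))"

definition item_bids :: "nat \<Rightarrow> nat \<Rightarrow> bidvec \<Rightarrow> (nat \<Rightarrow> 't \<times> bidvec) \<Rightarrow> nat \<Rightarrow> (nat \<Rightarrow> real option)" where
  "item_bids n i q w j = (\<lambda>k. if k = i then q j else if k < n then snd (w k) j else None)"

definition full_bids :: "nat \<Rightarrow> (nat \<Rightarrow> 't \<times> bidvec) \<Rightarrow> nat \<Rightarrow> (nat \<Rightarrow> real option)" where
  "full_bids n w j = (\<lambda>k. if k < n then snd (w k) j else None)"

definition won :: "(nat \<Rightarrow> (nat \<Rightarrow> real option) \<Rightarrow> nat option) \<Rightarrow> nat \<Rightarrow> nat \<Rightarrow> nat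
                   \<Rightarrow> bidvec \<Rightarrow> (nat \<Rightarrow> 't \<times> bidvec) \<Rightarrow> nat set" where
  "won alloc n m i q w = {j. j < m \<and> alloc j (item_bids n i q w j) = Some i}"

text \<open>The value part is a Bochner integral
  (the integrand lies in [0, v_i(t,S)] for monotone v), the payment part a nonnegative
  integral (payments are nonnegative), so the difference is well defined in ereal.\<close>

definition exp_util ::
  "(nat \<Rightarrow> (nat \<Rightarrow> real option) \<Rightarrow> nat option) \<Rightarrow> (nat \<Rightarrow> (nat \<Rightarrow> real option) \<Rightarrow> nat \<Rightarrow> real)
   \<Rightarrow> nat \<Rightarrow> nat \<Rightarrow> (nat \<Rightarrow> 't measure) \<Rightarrow> (nat \<Rightarrow> 't \<Rightarrow> bidvec measure)
   \<Rightarrow> (nat \<Rightarrow> 't \<Rightarrow> nat set \<Rightarrow> real) \<Rightarrow> nat \<Rightarrow> 't \<Rightarrow> bidvec measure \<Rightarrow> nat set \<Rightarrow> ereal" where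
  "exp_util alloc pay n m D s v i t \<sigma> S =
     ereal (\<integral>q. (\<integral>w. v i t (won alloc n m i q w \<inter> S) \<partial>others n m D s i) \<partial>\<sigma>)
     - enn2ereal (\<integral>\<^sup>+q. (\<integral>\<^sup>+w. ennreal (\<Sum>j\<in>S. pay j (item_bids n i q w j) i) \<partial>others n m D s i) \<partial>\<sigma>)"

definition mu ::
  "(nat \<Rightarrow> (nat \<Rightarrow> real option) \<Rightarrow> nat option) \<Rightarrow> (nat \<Rightarrow> (nat \<Rightarrow> real option) \<Rightarrow> nat \<Rightarrow> real)
   \<Rightarrow> nat \<Rightarrow> nat \<Rightarrow> (nat \<Rightarrow> 't measure) \<Rightarrow> (nat \<Rightarrow> 't \<Rightarrow> bidvec measure)
   \<Rightarrow> (nat \<Rightarrow> 't \<Rightarrow> nat set \<Rightarrow> real) \<Rightarrow> nat \<Rightarrow> 't \<Rightarrow> nat set \<Rightarrow> ereal" where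
  "mu alloc pay n m D s v i t S =
     (SUP q\<in>space (bid_space m). exp_util alloc pay n m D s v i t (return (bid_space m) q) S)"

definition revenue ::
  "(nat \<Rightarrow> (nat \<Rightarrow> real option) \<Rightarrow> nat \<Rightarrow> real)
   \<Rightarrow> nat \<Rightarrow> nat \<Rightarrow> (nat \<Rightarrow> 't measure) \<Rightarrow> (nat \<Rightarrow> 't \<Rightarrow> bidvec measure) \<Rightarrow> nat set \<Rightarrow> ennreal" where
  "revenue pay n m D s S =
     (\<Sum>i<n. \<Sum>j\<in>S. \<integral>\<^sup>+w. ennreal (pay j (full_bids n w j) i) \<partial>profile n m D s)"

definition valid_setting :: "nat \<Rightarrow> nat \<Rightarrow> (nat \<Rightarrow> 't measure) \<Rightarrow> (nat \<Rightarrow> 't \<Rightarrow> bidvec measure) \<Rightarrow> bool" where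
  "valid_setting n m D s \<longleftrightarrow>
     (\<forall>i<n. prob_space (D i) \<and> s i \<in> measurable (D i) (prob_algebra (bid_space m)))"

definition BNE ::
  "(nat \<Rightarrow> (nat \<Rightarrow> real option) \<Rightarrow> nat option) \<Rightarrow> (nat \<Rightarrow> (nat \<Rightarrow> real option) \<Rightarrow> nat \<Rightarrow> real)
   \<Rightarrow> nat \<Rightarrow> nat \<Rightarrow> (nat \<Rightarrow> 't measure) \<Rightarrow> (nat \<Rightarrow> 't \<Rightarrow> bidvec measure)
   \<Rightarrow> (nat \<Rightarrow> 't \<Rightarrow> nat set \<Rightarrow> real) \<Rightarrow> bool" where
  "BNE alloc pay n m D s v \<longleftrightarrow> valid_setting n m D s \<and>
     (\<forall>i<n. \<forall>t\<in>space (D i). \<forall>\<sigma>\<in>space (prob_algebra (bid_space m)).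
        exp_util alloc pay n m D s v i t \<sigma> {..<m} \<le> exp_util alloc pay n m D s v i t (s i t) {..<m})"

definition c_efficient ::
  "real \<Rightarrow> (nat \<Rightarrow> (nat \<Rightarrow> real option) \<Rightarrow> nat option) \<Rightarrow> (nat \<Rightarrow> (nat \<Rightarrow> real option) \<Rightarrow> nat \<Rightarrow> real)
   \<Rightarrow> nat \<Rightarrow> nat \<Rightarrow> (nat \<Rightarrow> 't measure) \<Rightarrow> (nat \<Rightarrow> 't \<Rightarrow> bidvec measure)
   \<Rightarrow> (nat \<Rightarrow> 't \<Rightarrow> nat set \<Rightarrow> real) \<Rightarrow> bool" where
  "c_efficient c alloc pay n m D s v \<longleftrightarrow>
     (\<forall>j<m. \<forall>bb k. (\<forall>k' x. bb k' = Some x \<longrightarrow> x \<ge> 0) \<longrightarrow> (pay j bb k \<ge> 0 \<and> (bb k = None \<longrightarrow> pay j bb k = 0))) \<and>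
     (\<forall>j<m. \<forall>bb. highest n bb \<noteq> {} \<longrightarrow> (\<exists>k\<in>highest n bb. alloc j bb = Some k)) \<and>
     (\<forall>i<n. \<forall>t\<in>space (D i). \<forall>S\<subseteq>{..<m}.
        mu alloc pay n m D s v i t S + enn2ereal (revenue pay n m D s S) \<ge> ereal (c * v i t S))"

end

theory Submission
  imports Defs
begin
definition bidc :: "real option \<Rightarrow> real" where
  "bidc ob = (case ob of None \<Rightarrow> -1 | Some x \<Rightarrow> x)"

definition bval :: "real option \<Rightarrow> real" where
  "bval ob = (case ob of None \<Rightarrow> 0 | Some x \<Rightarrow> x)"

lemma space_bid_item: "space bid_item = insert None (Some ` {0..})"
  unfolding bid_item_def by simp

lemma bidc_meas[measurable]: "bidc \<in> borel_measurable bid_item"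
  unfolding bid_item_def bidc_def[abs_def] by (rule measurable_vimage_algebra1) auto

lemma bval_meas[measurable]: "bval \<in> borel_measurable bid_item"
proof -
  have "(\<lambda>ob. max 0 (bidc ob)) \<in> borel_measurable bid_item" by measurable
  moreover have "\<And>ob. ob \<in> space bid_item \<Longrightarrow> max 0 (bidc ob) = bval ob"
    by (auto simp: space_bid_item bidc_def bval_def)
  ultimately show ?thesis using measurable_cong by (metis (no_types, lifting))
qed

lemma to_bid_item:
  assumes "f \<in> space M \<rightarrow> space bid_item" "(\<lambda>x. bidc (f x)) \<in> borel_measurable M"
  shows "f \<in> measurable M bid_item"
  unfolding bid_item_def
  by (rule measurable_vimage_algebra2) (use assms in \<open>auto simp: space_bid_item bidc_def\<close>)

lemma joint_props:
  assumes "prob_space Di" "si \<in> Di \<rightarrow>\<^sub>M prob_algebra (bid_space m)"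
  shows "prob_space (joint m Di si)" "sets (joint m Di si) = sets (Di \<Otimes>\<^sub>M bid_space m)"
proof -
  have k: "(\<lambda>t. bind (si t) (\<lambda>b. return (Di \<Otimes>\<^sub>M bid_space m) (t, b))) \<in> Di \<rightarrow>\<^sub>M prob_algebra (Di \<Otimes>\<^sub>M bid_space m)"
    using assms(2) by measurable
  have D: "Di \<in> space (prob_algebra Di)" using assms(1) by (simp add: space_prob_algebra)
  show "prob_space (joint m Di si)" unfolding joint_def by (rule prob_space_bind'[OF D k])
  show "sets (joint m Di si) = sets (Di \<Otimes>\<^sub>M bid_space m)" unfolding joint_def by (rule sets_bind'[OF D k])
qed

lemma highest_iff:
  assumes "\<And>k. k < n \<Longrightarrow> bb k \<in> space bid_item" "k < n"
  shows "k \<in> highest n bb \<longleftrightarrow> 0 \<le> bidc (bb k) \<and> (\<forall>k'\<in>{..<n}. bidc (bb k') \<le> bidc (bb k))"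
proof
  assume "k \<in> highest n bb"
  then obtain x where x: "bb k = Some x" "\<forall>k' y. k' < n \<longrightarrow> bb k' = Some y \<longrightarrow> y \<le> x"
    by (auto simp: highest_def)
  have "x \<ge> 0" using assms(1)[OF assms(2)] x(1) by (auto simp: space_bid_item)
  show "0 \<le> bidc (bb k) \<and> (\<forall>k'\<in>{..<n}. bidc (bb k') \<le> bidc (bb k))"
  proof (intro conjI ballI)
    show "0 \<le> bidc (bb k)" using x \<open>x \<ge> 0\<close> by (simp add: bidc_def)
    fix k' assume "k' \<in> {..<n}"
    then show "bidc (bb k') \<le> bidc (bb k)" using x \<open>x \<ge> 0\<close>
      by (cases "bb k'") (auto simp: bidc_def)
  qed
next
  assume a: "0 \<le> bidc (bb k) \<and> (\<forall>k'\<in>{..<n}. bidc (bb k') \<le> bidc (bb k))"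
  then obtain x where x: "bb k = Some x" by (cases "bb k") (auto simp: bidc_def)
  have "\<forall>k' y. k' < n \<longrightarrow> bb k' = Some y \<longrightarrow> y \<le> x"
  proof (intro allI impI)
    fix k' y assume "k' < n" "bb k' = Some y"
    then have "bidc (bb k') \<le> bidc (bb k)" using a by blast
    then show "y \<le> x" using x \<open>bb k' = Some y\<close> by (simp add: bidc_def)
  qed
  then show "k \<in> highest n bb" using x assms(2) by (simp add: highest_def)
qed

lemma setfun_meas:
  assumes "finite S" "\<And>x. x \<in> space M \<Longrightarrow> F x \<subseteq> S"
    "\<And>j. j \<in> S \<Longrightarrow> {x \<in> space M. j \<in> F x} \<in> sets M"
  shows "F \<in> measurable M (count_space (Pow S))"
proof -
  have c: "countable (Pow S)" using assms(1) by (simp add: countable_finite)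
  show ?thesis
  proof (subst measurable_count_space_eq_countable[OF c], intro conjI ballI Pi_I)
    fix x assume "x \<in> space M" then show "F x \<in> Pow S" using assms(2) by auto
  next
    fix A assume A: "A \<in> Pow S"
    have eq: "\<And>x. x \<in> space M \<Longrightarrow> F x = A \<longleftrightarrow> (\<forall>j\<in>S. j \<in> F x \<longleftrightarrow> j \<in> A)"
    proof -
      fix x assume "x \<in> space M"
      then have "F x \<subseteq> S" using assms(2) by blast
      then show "F x = A \<longleftrightarrow> (\<forall>j\<in>S. j \<in> F x \<longleftrightarrow> j \<in> A)" using A
        unfolding set_eq_iff by (metis PowD subsetD)
    qed
    have "F -` {A} \<inter> space M = space M \<inter> (\<Inter>j\<in>S. {x \<in> space M. j \<in> F x \<longleftrightarrow> j \<in> A})"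
    proof (rule set_eqI)
      fix x show "x \<in> F -` {A} \<inter> space M \<longleftrightarrow> x \<in> space M \<inter> (\<Inter>j\<in>S. {x \<in> space M. j \<in> F x \<longleftrightarrow> j \<in> A})"
        using eq[of x] by (cases "S = {}") auto
    qed
    also have "\<dots> \<in> sets M"
    proof (cases "S = {}")
      case True then show ?thesis by simp
    next
      case False
      have "\<And>j. j \<in> S \<Longrightarrow> {x \<in> space M. j \<in> F x \<longleftrightarrow> j \<in> A} \<in> sets M"
      proof -
        fix j assume j: "j \<in> S"
        show "{x \<in> space M. j \<in> F x \<longleftrightarrow> j \<in> A} \<in> sets M"
        proof (cases "j \<in> A")
          case True then show ?thesis using assms(3)[OF j] by simp
        next
          case False
          have "{x \<in> space M. j \<in> F x \<longleftrightarrow> j \<in> A} = space M - {x \<in> space M. j \<in> F x}"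
            using False by auto
          then show ?thesis using assms(3)[OF j] by auto
        qed
      qed
      then have "(\<Inter>j\<in>S. {x \<in> space M. j \<in> F x \<longleftrightarrow> j \<in> A}) \<in> sets M"
        using False assms(1) by (intro sets.finite_INT) auto
      then show ?thesis by auto
    qed
    finally show "F -` {A} \<inter> space M \<in> sets M" .
  qed
qed

lemma setfun_meas2:
  assumes "F \<in> measurable M (count_space (Pow S))" "finite S"
  shows "(\<lambda>x. g (F x) :: real) \<in> borel_measurable M"
  by (rule measurable_compose_countable'[where I="Pow S" and f="\<lambda>A x. g A", OF _ assms(1)])
     (use assms(2) in \<open>auto simp: countable_finite\<close>)

locale sap_setup =
  fixes n m :: nat and D :: "nat \<Rightarrow> 't measure" and s :: "nat \<Rightarrow> 't \<Rightarrow> bidvec measure" and i :: nat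
  assumes vs: "valid_setting n m D s" and i_lt: "i < n"
begin

abbreviation "K \<equiv> {..<n} - {i}"
abbreviation "P \<equiv> others n m D s i"
abbreviation "J k \<equiv> joint m (D k) (s k)"

lemma J_prob: "k < n \<Longrightarrow> prob_space (J k)"
  using vs joint_props(1) unfolding valid_setting_def by blast

lemma J_sets: "k < n \<Longrightarrow> sets (J k) = sets (D k \<Otimes>\<^sub>M bid_space m)"
  using vs joint_props(2) unfolding valid_setting_def by blast

lemma J_space: "k < n \<Longrightarrow> space (J k) = space (D k \<Otimes>\<^sub>M bid_space m)"
  using J_sets sets_eq_imp_space_eq by blast

lemma P_prob: "prob_space P"
  unfolding others_def by (rule prob_space_PiM) (use J_prob in auto)

lemma profile_prob: "prob_space (profile n m D s)"
  unfolding profile_def by (rule prob_space_PiM) (use J_prob in auto)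

lemma snd_J_meas: "k < n \<Longrightarrow> j < m \<Longrightarrow> (\<lambda>x. snd x j) \<in> measurable (J k) bid_item"
proof -
  assume k: "k < n" and j: "j < m"
  have "(\<lambda>x. snd x j) \<in> measurable (D k \<Otimes>\<^sub>M bid_space m) bid_item"
    unfolding bid_space_def by measurable (simp add: j)
  then show ?thesis by (simp only: measurable_cong_sets[OF J_sets[OF k] refl])
qed

lemma snd_J_space: "k < n \<Longrightarrow> j < m \<Longrightarrow> x \<in> space (J k) \<Longrightarrow> snd x j \<in> space bid_item"
  by (rule measurable_space[OF snd_J_meas])

lemma comp_meas: "k \<in> K \<Longrightarrow> j < m \<Longrightarrow> (\<lambda>w. snd (w k) j) \<in> measurable P bid_item"
proof -
  assume k: "k \<in> K" and j: "j < m"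
  have "(\<lambda>w. w k) \<in> measurable P (J k)" unfolding others_def using k
    by (rule measurable_component_singleton)
  then show ?thesis using snd_J_meas[OF _ j] k by (auto intro: measurable_compose)
qed

lemma comp_space: "w \<in> space P \<Longrightarrow> k \<in> K \<Longrightarrow> j < m \<Longrightarrow> snd (w k) j \<in> space bid_item"
  by (rule measurable_space[OF comp_meas])

definition h :: "nat \<Rightarrow> (nat \<Rightarrow> 't \<times> bidvec) \<Rightarrow> real" where
  "h j w = (\<Sum>k\<in>K. bval (snd (w k) j))"

lemma bval_nonneg: "ob \<in> space bid_item \<Longrightarrow> 0 \<le> bval ob"
  by (auto simp: space_bid_item bval_def)

lemma bval_le_bidc: "ob \<in> space bid_item \<Longrightarrow> bidc ob \<le> bval ob"
  by (auto simp: space_bid_item bval_def bidc_def)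

lemma h_meas: "j < m \<Longrightarrow> h j \<in> borel_measurable P"
  unfolding h_def[abs_def]
  by (intro borel_measurable_sum measurable_compose[OF comp_meas bval_meas]) auto

lemma h_nonneg: "w \<in> space P \<Longrightarrow> j < m \<Longrightarrow> 0 \<le> h j w"
  unfolding h_def by (intro sum_nonneg bval_nonneg comp_space) auto

lemma h_ge: "w \<in> space P \<Longrightarrow> j < m \<Longrightarrow> k \<in> K \<Longrightarrow> bidc (snd (w k) j) \<le> h j w"
proof -
  assume w: "w \<in> space P" and j: "j < m" and k: "k \<in> K"
  have "bidc (snd (w k) j) \<le> bval (snd (w k) j)" by (rule bval_le_bidc[OF comp_space[OF w k j]])
  also have "\<dots> \<le> h j w" unfolding h_def
    by (rule member_le_sum) (use k w j comp_space bval_nonneg in auto)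
  finally show ?thesis .
qed

end

context sap_setup begin

abbreviation "BP \<equiv> bid_space m \<Otimes>\<^sub>M P"

lemma space_BP_fst: "x \<in> space BP \<Longrightarrow> j < m \<Longrightarrow> fst x j \<in> space bid_item"
proof -
  assume x: "x \<in> space BP" and j: "j < m"
  then have "fst x \<in> space (bid_space m)" by (simp add: space_pair_measure mem_Times_iff)
  then have "fst x \<in> (\<Pi>\<^sub>E j\<in>{..<m}. space bid_item)" by (simp add: bid_space_def space_PiM)
  from PiE_mem[OF this, of j] show ?thesis using j by simp
qed

lemma space_BP_snd: "x \<in> space BP \<Longrightarrow> snd x \<in> space P"
  by (simp add: space_pair_measure mem_Times_iff)

lemma bb_meas: "j < m \<Longrightarrow> (\<lambda>x. bidc (item_bids n i (fst x) (snd x) j k)) \<in> borel_measurable BP"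
proof -
  assume j: "j < m"
  consider "k = i" | "k \<noteq> i" "k < n" | "\<not> k < n" "k \<noteq> i" by blast
  then show ?thesis
  proof cases
    case 1
    have "(\<lambda>x. fst x j) \<in> measurable BP bid_item" unfolding bid_space_def
      by measurable (simp add: j)
    then show ?thesis using 1 by (simp add: item_bids_def)
  next
    case 2
    have "(\<lambda>x. snd (snd x k) j) \<in> measurable BP bid_item"
      using measurable_compose[OF measurable_snd comp_meas[of k j]] 2 j by simp
    then show ?thesis using 2 by (simp add: item_bids_def)
  next
    case 3
    then show ?thesis by (simp add: item_bids_def)
  qed
qed

lemma bb_space: "x \<in> space BP \<Longrightarrow> j < m \<Longrightarrow> k < n \<Longrightarrow> item_bids n i (fst x) (snd x) j k \<in> space bid_item"
proof -
  assume x: "x \<in> space BP" and j: "j < m" and k: "k < n"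
  show ?thesis
  proof (cases "k = i")
    case True then show ?thesis using space_BP_fst[OF x j] by (simp add: item_bids_def)
  next
    case False
    then have "k \<in> K" using k by simp
    then show ?thesis using comp_space[OF space_BP_snd[OF x] _ j] False k by (simp add: item_bids_def)
  qed
qed

lemma highest_meas:
  assumes j: "j < m"
  shows "(\<lambda>x. highest n (item_bids n i (fst x) (snd x) j)) \<in> measurable BP (count_space (Pow {..<n}))"
proof (rule setfun_meas)
  fix k assume k: "k \<in> {..<n}"
  note bm[measurable] = bb_meas[OF j]
  have "{x \<in> space BP. k \<in> highest n (item_bids n i (fst x) (snd x) j)} =
        {x \<in> space BP. 0 \<le> bidc (item_bids n i (fst x) (snd x) j k) \<and>
           (\<forall>k'\<in>{..<n}. bidc (item_bids n i (fst x) (snd x) j k') \<le> bidc (item_bids n i (fst x) (snd x) j k))}"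
  proof (rule set_eqI, rule iffI)
    fix x assume "x \<in> {x \<in> space BP. k \<in> highest n (item_bids n i (fst x) (snd x) j)}"
    then have x: "x \<in> space BP" and hk: "k \<in> highest n (item_bids n i (fst x) (snd x) j)" by auto
    show "x \<in> {x \<in> space BP. 0 \<le> bidc (item_bids n i (fst x) (snd x) j k) \<and>
           (\<forall>k'\<in>{..<n}. bidc (item_bids n i (fst x) (snd x) j k') \<le> bidc (item_bids n i (fst x) (snd x) j k))}"
      using highest_iff[where bb="item_bids n i (fst x) (snd x) j", OF bb_space[OF x j]] k hk x by auto
  next
    fix x assume "x \<in> {x \<in> space BP. 0 \<le> bidc (item_bids n i (fst x) (snd x) j k) \<and>
           (\<forall>k'\<in>{..<n}. bidc (item_bids n i (fst x) (snd x) j k') \<le> bidc (item_bids n i (fst x) (snd x) j k))}"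
    then have x: "x \<in> space BP" and c: "0 \<le> bidc (item_bids n i (fst x) (snd x) j k) \<and>
           (\<forall>k'\<in>{..<n}. bidc (item_bids n i (fst x) (snd x) j k') \<le> bidc (item_bids n i (fst x) (snd x) j k))" by auto
    show "x \<in> {x \<in> space BP. k \<in> highest n (item_bids n i (fst x) (snd x) j)}"
      using highest_iff[where bb="item_bids n i (fst x) (snd x) j", OF bb_space[OF x j]] k c x by auto
  qed
  also have "\<dots> \<in> sets BP" by measurable
  finally show "{x \<in> space BP. k \<in> highest n (item_bids n i (fst x) (snd x) j)} \<in> sets BP" .
qed (auto simp: highest_def)

lemma win_sets:
  assumes j: "j < m"
  shows "{x \<in> space BP. sap_alloc tb n j (item_bids n i (fst x) (snd x) j) = Some i} \<in> sets BP"
proof -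
  have "(\<lambda>x. (\<lambda>A. A \<noteq> {} \<and> tb j A = i) (highest n (item_bids n i (fst x) (snd x) j))) \<in> measurable BP (count_space UNIV)"
    by (rule measurable_compose_countable'[where I="Pow {..<n}", OF _ highest_meas[OF j]])
       (auto simp: countable_finite)
  then have "{x \<in> space BP. (\<lambda>A. A \<noteq> {} \<and> tb j A = i) (highest n (item_bids n i (fst x) (snd x) j))} \<in> sets BP"
    by (simp add: pred_def)
  moreover have "\<And>bb. sap_alloc tb n j bb = Some i \<longleftrightarrow> (highest n bb \<noteq> {} \<and> tb j (highest n bb) = i)"
    by (simp add: sap_alloc_def)
  ultimately show ?thesis by simp
qed

lemma val_meas:
  assumes S: "S \<subseteq> {..<m}"
  shows "(\<lambda>x. g (won (sap_alloc tb n) n m i (fst x) (snd x) \<inter> S) :: real) \<in> borel_measurable BP"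
proof (rule setfun_meas2[OF setfun_meas])
  show "finite S" using S finite_subset by blast
  fix j assume j: "j \<in> S"
  then have jm: "j < m" using S by auto
  have "{x \<in> space BP. j \<in> won (sap_alloc tb n) n m i (fst x) (snd x) \<inter> S} =
        {x \<in> space BP. sap_alloc tb n j (item_bids n i (fst x) (snd x) j) = Some i}"
    using j jm by (auto simp: won_def)
  then show "{x \<in> space BP. j \<in> won (sap_alloc tb n) n m i (fst x) (snd x) \<inter> S} \<in> sets BP"
    using win_sets[OF jm] by simp
qed (use S in \<open>auto intro: finite_subset\<close>)

end

lemma bounded_int:
  fixes f :: "'a \<Rightarrow> real"
  assumes "prob_space M" "f \<in> borel_measurable M" "\<And>x. x \<in> space M \<Longrightarrow> 0 \<le> f x \<and> f x \<le> c"
  shows "integrable M f" "0 \<le> integral\<^sup>L M f" "integral\<^sup>L M f \<le> c"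
proof -
  interpret prob_space M by fact
  show I: "integrable M f"
    by (rule integrable_const_bound[where B=c]) (use assms in \<open>auto\<close>)
  show "0 \<le> integral\<^sup>L M f" by (rule Bochner_Integration.integral_nonneg) (use assms(3) in blast)
  have "integral\<^sup>L M f \<le> integral\<^sup>L M (\<lambda>_. c)"
    by (rule integral_mono[OF I]) (use assms(3) in auto)
  then show "integral\<^sup>L M f \<le> c" by (simp add: prob_space)
qed

context sap_setup begin

definition qd :: "real \<Rightarrow> (nat \<Rightarrow> 't \<times> bidvec) \<Rightarrow> bidvec" where
  "qd e w' = (\<lambda>j\<in>{..<m}. Some (h j w' + e))"

lemma qd_meas: "0 \<le> e \<Longrightarrow> qd e \<in> measurable P (bid_space m)"
proof -
  assume e: "0 \<le> e"
  show ?thesis unfolding qd_def[abs_def] bid_space_def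
  proof (rule measurable_restrict)
    fix j :: nat assume j: "j \<in> {..<m}"
    show "(\<lambda>w'. Some (h j w' + e)) \<in> measurable P bid_item"
    proof (rule to_bid_item)
      show "(\<lambda>w'. Some (h j w' + e)) \<in> space P \<rightarrow> space bid_item"
        using h_nonneg e j by (auto simp: space_bid_item)
      show "(\<lambda>x. bidc (Some (h j x + e))) \<in> borel_measurable P"
        using h_meas[of j] j by (simp add: bidc_def)
    qed
  qed
qed

lemma qd_space: "0 \<le> e \<Longrightarrow> w' \<in> space P \<Longrightarrow> qd e w' \<in> space (bid_space m)"
  by (rule measurable_space[OF qd_meas])

lemma qd_wins:
  assumes e: "0 < e" and w: "w \<in> space P" and w': "w' \<in> space P" and j: "j < m"
    and le: "h j w \<le> h j w'" and tb: "\<And>j H. H \<noteq> {} \<Longrightarrow> tb j H \<in> H"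
  shows "j \<in> won (sap_alloc tb n) n m i (qd e w') w"
proof -
  let ?bb = "item_bids n i (qd e w') w j"
  have bbi: "?bb i = Some (h j w' + e)" using j by (simp add: item_bids_def qd_def)
  have oth: "y < h j w' + e" if "k < n" "k \<noteq> i" "?bb k = Some y" for k y
  proof -
    have kK: "k \<in> K" using that by simp
    have "?bb k = snd (w k) j" using that by (simp add: item_bids_def)
    then have "snd (w k) j = Some y" using that by simp
    then have "bidc (snd (w k) j) = y" by (simp add: bidc_def)
    then have "y \<le> h j w" using h_ge[OF w j kK] by simp
    then show ?thesis using le e by simp
  qed
  have "highest n ?bb = {i}"
  proof (rule set_eqI)
    fix k show "k \<in> highest n ?bb \<longleftrightarrow> k \<in> {i}"
    proof
      assume k: "k \<in> highest n ?bb"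
      then obtain x where x: "k < n" "?bb k = Some x" "\<forall>k' y. k' < n \<longrightarrow> ?bb k' = Some y \<longrightarrow> y \<le> x"
        unfolding highest_def by blast
      have "h j w' + e \<le> x" using x(3) bbi i_lt by blast
      show "k \<in> {i}"
      proof (rule ccontr)
        assume "k \<notin> {i}"
        then have "x < h j w' + e" using oth[OF x(1) _ x(2)] by simp
        then show False using \<open>h j w' + e \<le> x\<close> by simp
      qed
    next
      assume "k \<in> {i}"
      then have ki: "k = i" by simp
      have "\<forall>k' y. k' < n \<longrightarrow> ?bb k' = Some y \<longrightarrow> y \<le> h j w' + e"
      proof (intro allI impI)
        fix k' y assume "k' < n" "?bb k' = Some y"
        then show "y \<le> h j w' + e" using oth[of k' y] bbi by (cases "k' = i") auto
      qed
      then show "k \<in> highest n ?bb" using ki bbi i_lt unfolding highest_def by blast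
    qed
  qed
  then have "sap_alloc tb n j ?bb = Some i" using tb[of "{i}" j] by (simp add: sap_alloc_def)
  then show ?thesis using j by (simp add: won_def)
qed

end

context sap_setup begin

lemma B_comp_space: "q \<in> space (bid_space m) \<Longrightarrow> j < m \<Longrightarrow> q j \<in> space bid_item"
proof -
  assume "q \<in> space (bid_space m)" "j < m"
  then have "q \<in> (\<Pi>\<^sub>E j\<in>{..<m}. space bid_item)" by (simp add: bid_space_def space_PiM)
  from PiE_mem[OF this, of j] show ?thesis using \<open>j < m\<close> by simp
qed

lemma B_comp_meas: "j < m \<Longrightarrow> (\<lambda>q. bval (q j)) \<in> borel_measurable (bid_space m)"
  unfolding bid_space_def by measurable

lemma vpart_meas:
  assumes S: "S \<subseteq> {..<m}"
  shows "(\<lambda>q. \<integral>w. (g (won (sap_alloc tb n) n m i q w \<inter> S) :: real) \<partial>P) \<in> borel_measurable (bid_space m)"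
proof -
  interpret Pp: prob_space P by (rule P_prob)
  have "(\<lambda>x. g (won (sap_alloc tb n) n m i (fst x) (snd x) \<inter> S)) \<in> borel_measurable BP"
    by (rule val_meas[OF S])
  then have "case_prod (\<lambda>q w. g (won (sap_alloc tb n) n m i q w \<inter> S)) \<in> borel_measurable BP"
    by (simp add: split_beta')
  then show ?thesis by (rule Pp.borel_measurable_lebesgue_integral)
qed

lemma exp_util_return:
  assumes q: "q \<in> space (bid_space m)" and S: "S \<subseteq> {..<m}"
  shows "exp_util (sap_alloc tb n) sap_pay n m D s v i t (return (bid_space m) q) S =
         ereal (\<integral>w. v i t (won (sap_alloc tb n) n m i q w \<inter> S) \<partial>P) - ereal (\<Sum>j\<in>S. bval (q j))"
proof -
  interpret Pp: prob_space P by (rule P_prob)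
  have pay: "\<And>q' w. (\<Sum>j\<in>S. sap_pay j (item_bids n i q' w j) i) = (\<Sum>j\<in>S. bval (q' j))"
    by (simp add: sap_pay_def item_bids_def bval_def)
  have m1: "(\<lambda>q'. ennreal (\<Sum>j\<in>S. bval (q' j))) \<in> borel_measurable (bid_space m)"
    using S B_comp_meas by (intro measurable_compose[OF _ measurable_ennreal] borel_measurable_sum) auto
  have nn: "(\<integral>\<^sup>+q'. (\<integral>\<^sup>+w. ennreal (\<Sum>j\<in>S. sap_pay j (item_bids n i q' w j) i) \<partial>P) \<partial>return (bid_space m) q)
        = ennreal (\<Sum>j\<in>S. bval (q j))"
    by (simp add: pay Pp.emeasure_space_1 nn_integral_return[OF q m1])
  have nonneg: "0 \<le> (\<Sum>j\<in>S. bval (q j))"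
    using S by (intro sum_nonneg bval_nonneg B_comp_space[OF q]) auto
  show ?thesis unfolding exp_util_def nn
    by (simp add: integral_return[OF q vpart_meas[OF S]] nonneg)
qed

end

context sap_setup begin

abbreviation "PP \<equiv> P \<Otimes>\<^sub>M P"

lemma PP_prob: "prob_space PP"
proof -
  interpret Pp: prob_space P by (rule P_prob)
  interpret pair_prob_space P P by unfold_locales
  show ?thesis by unfold_locales
qed

lemma gmeas:
  assumes S: "S \<subseteq> {..<m}" and f1: "f1 \<in> measurable M P" and f2: "f2 \<in> measurable M P"
  shows "(\<lambda>x. (V {j\<in>S. h j (f1 x) \<le> h j (f2 x)} :: real)) \<in> borel_measurable M"
proof (rule setfun_meas2[OF setfun_meas])
  show "finite S" using S finite_subset by blast
  fix j assume j: "j \<in> S"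
  then have jm: "j < m" using S by auto
  have [measurable]: "h j \<in> borel_measurable P" by (rule h_meas[OF jm])
  note f1[measurable] f2[measurable]
  have "{x \<in> space M. j \<in> {j\<in>S. h j (f1 x) \<le> h j (f2 x)}} = {x \<in> space M. h j (f1 x) \<le> h j (f2 x)}"
    using j by auto
  also have "\<dots> \<in> sets M" by measurable
  finally show "{x \<in> space M. j \<in> {j\<in>S. h j (f1 x) \<le> h j (f2 x)}} \<in> sets M" .
qed (use S in \<open>auto intro: finite_subset\<close>)

end

context sap_setup begin

lemma avg:
  fixes V :: "nat set \<Rightarrow> real"
  assumes S: "S \<subseteq> {..<m}" and e: "0 < e"
    and Vnn: "\<And>A. A \<subseteq> {..<m} \<Longrightarrow> 0 \<le> V A"
    and Vmono: "\<And>A B. A \<subseteq> B \<Longrightarrow> B \<subseteq> {..<m} \<Longrightarrow> V A \<le> V B"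
    and Vsub: "\<And>A B. A \<subseteq> {..<m} \<Longrightarrow> B \<subseteq> {..<m} \<Longrightarrow> V (A \<union> B) \<le> V A + V B"
    and tb: "\<And>j H. H \<noteq> {} \<Longrightarrow> tb j H \<in> H"
  shows "integrable P (\<lambda>w'. \<integral>w. V (won (sap_alloc tb n) n m i (qd e w') w \<inter> S) \<partial>P)"
    "V S / 2 \<le> (\<integral>w'. (\<integral>w. V (won (sap_alloc tb n) n m i (qd e w') w \<inter> S) \<partial>P) \<partial>P)"
proof -
  interpret Pp: prob_space P by (rule P_prob)
  interpret PPp: pair_prob_space P P by unfold_locales
  have PPprob: "prob_space PP" by (rule PP_prob)
  define F where "F w' = (\<integral>w. V (won (sap_alloc tb n) n m i (qd e w') w \<inter> S) \<partial>P)" for w'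
  define g where "g w' w = V {j\<in>S. h j w \<le> h j w'}" for w' w
  have bnd: "\<And>A. A \<subseteq> S \<Longrightarrow> 0 \<le> V A \<and> V A \<le> V S"
    using S Vnn Vmono by (meson order_trans)
  have Fw_meas: "(\<lambda>w. V (won (sap_alloc tb n) n m i (qd e w') w \<inter> S)) \<in> borel_measurable P"
    if w': "w' \<in> space P" for w'
  proof -
    have "(\<lambda>w. (qd e w', w)) \<in> measurable P BP"
      using e w' by (intro measurable_Pair measurable_const[OF qd_space] measurable_ident_sets) auto
    from measurable_compose[OF this val_meas[OF S, of V]] show ?thesis by simp
  qed
  have F_meas: "F \<in> borel_measurable P"
    unfolding F_def using measurable_compose[OF qd_meas vpart_meas[OF S, of V]] e by simp
  have Fw_bnd: "\<And>w' w. w \<in> space P \<Longrightarrow> 0 \<le> V (won (sap_alloc tb n) n m i (qd e w') w \<inter> S) \<and>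
      V (won (sap_alloc tb n) n m i (qd e w') w \<inter> S) \<le> V S" by (rule bnd) auto
  have F_bnd: "0 \<le> F w' \<and> F w' \<le> V S" if "w' \<in> space P" for w'
    using bounded_int(2,3)[OF P_prob Fw_meas[OF that] Fw_bnd] unfolding F_def by simp
  show F_int: "integrable P F" unfolding F_def[symmetric]
    by (rule bounded_int(1)[OF P_prob F_meas F_bnd])
  have g_bnd: "\<And>w' w. 0 \<le> g w' w \<and> g w' w \<le> V S" unfolding g_def by (rule bnd) auto
  have gw_meas: "g w' \<in> borel_measurable P" if w': "w' \<in> space P" for w'
  proof -
    have "(\<lambda>x. V {j\<in>S. h j ((\<lambda>w. w) x) \<le> h j ((\<lambda>_. w') x)}) \<in> borel_measurable P"
      by (rule gmeas[OF S measurable_ident_sets[OF refl] measurable_const[OF w']])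
    then show ?thesis unfolding g_def by simp
  qed
  have gc: "case_prod g \<in> borel_measurable PP"
    unfolding g_def split_beta' by (rule gmeas[OF S measurable_snd measurable_fst])
  have gc2: "case_prod (\<lambda>w' w. g w w') \<in> borel_measurable PP"
    unfolding g_def split_beta' by (rule gmeas[OF S measurable_fst measurable_snd])
  define G where "G w' = (\<integral>w. g w' w \<partial>P)" for w'
  define G2 where "G2 w' = (\<integral>w. g w w' \<partial>P)" for w'
  have G_meas: "G \<in> borel_measurable P" unfolding G_def by (rule Pp.borel_measurable_lebesgue_integral[OF gc])
  have G2_meas: "G2 \<in> borel_measurable P" unfolding G2_def by (rule Pp.borel_measurable_lebesgue_integral[OF gc2])
  have gw_int: "integrable P (g w')" if "w' \<in> space P" for w' by (rule bounded_int(1)[OF P_prob gw_meas[OF that] g_bnd])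
  have gw2_meas: "(\<lambda>w. g w w') \<in> borel_measurable P" if w': "w' \<in> space P" for w'
  proof -
    have "(\<lambda>x. V {j\<in>S. h j ((\<lambda>_. w') x) \<le> h j ((\<lambda>w. w) x)}) \<in> borel_measurable P"
      by (rule gmeas[OF S measurable_const[OF w'] measurable_ident_sets[OF refl]])
    then show ?thesis unfolding g_def by simp
  qed
  have gw2_int: "integrable P (\<lambda>w. g w w')" if "w' \<in> space P" for w' by (rule bounded_int(1)[OF P_prob gw2_meas[OF that] g_bnd])
  have G_bnd: "0 \<le> G w' \<and> G w' \<le> V S" if "w' \<in> space P" for w'
    using bounded_int(2,3)[OF P_prob gw_meas[OF that] g_bnd] unfolding G_def by simp
  have G2_bnd: "0 \<le> G2 w' \<and> G2 w' \<le> V S" if "w' \<in> space P" for w'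
    using bounded_int(2,3)[OF P_prob gw2_meas[OF that] g_bnd] unfolding G2_def by simp
  have G_int: "integrable P G" by (rule bounded_int(1)[OF P_prob G_meas G_bnd])
  have G2_int: "integrable P G2" by (rule bounded_int(1)[OF P_prob G2_meas G2_bnd])
  have FG: "G w' \<le> F w'" if w': "w' \<in> space P" for w'
    unfolding G_def F_def
  proof (rule integral_mono[OF gw_int[OF w'] bounded_int(1)[OF P_prob Fw_meas[OF w'] Fw_bnd]])
    fix w assume w: "w \<in> space P"
    have "{j\<in>S. h j w \<le> h j w'} \<subseteq> won (sap_alloc tb n) n m i (qd e w') w \<inter> S"
      using qd_wins[OF e w w' _ _ tb] S by auto
    then show "g w' w \<le> V (won (sap_alloc tb n) n m i (qd e w') w \<inter> S)"
      unfolding g_def using S by (intro Vmono) auto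
  qed
  have "integral\<^sup>L P G \<le> integral\<^sup>L P F" by (rule integral_mono[OF G_int F_int FG])
  have gint: "integrable PP (case_prod g)"
    by (rule bounded_int(1)[OF PPprob gc, where c="V S"]) (simp add: split_beta' g_bnd)
  have fub: "integral\<^sup>L P G2 = integral\<^sup>L P G"
    unfolding G_def G2_def by (rule PPp.Fubini_integral[OF gint])
  have sumG: "V S \<le> G w' + G2 w'" if w': "w' \<in> space P" for w'
  proof -
    have "G w' + G2 w' = (\<integral>w. g w' w + g w w' \<partial>P)"
      unfolding G_def G2_def by (rule Bochner_Integration.integral_add[OF gw_int[OF w'] gw2_int[OF w'], symmetric])
    also have "\<dots> \<ge> (\<integral>w. V S \<partial>P)"
    proof (rule integral_mono)
      show "integrable P (\<lambda>w. V S)" by simp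
      show "integrable P (\<lambda>w. g w' w + g w w')" using gw_int[OF w'] gw2_int[OF w'] by simp
      fix w
      have "{j\<in>S. h j w \<le> h j w'} \<union> {j\<in>S. h j w' \<le> h j w} = S" by auto
      then have "V S \<le> g w' w + g w w'"
        unfolding g_def using Vsub[of "{j\<in>S. h j w \<le> h j w'}" "{j\<in>S. h j w' \<le> h j w}"] S by auto
      then show "V S \<le> g w' w + g w w'" .
    qed
    finally show ?thesis by (simp add: Pp.prob_space)
  qed
  have "V S \<le> integral\<^sup>L P G + integral\<^sup>L P G2"
  proof -
    have "(\<integral>w'. V S \<partial>P) \<le> (\<integral>w'. G w' + G2 w' \<partial>P)"
      by (rule integral_mono) (use G_int G2_int sumG in auto)
    also have "\<dots> = integral\<^sup>L P G + integral\<^sup>L P G2"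
      by (rule Bochner_Integration.integral_add[OF G_int G2_int])
    finally show ?thesis by (simp add: Pp.prob_space)
  qed
  then show "V S / 2 \<le> (\<integral>w'. F w' \<partial>P)"
    using fub \<open>integral\<^sup>L P G \<le> integral\<^sup>L P F\<close> by simp
qed

end

context sap_setup begin

lemma comp_nn_P:
  assumes k: "k \<in> K" and f: "f \<in> borel_measurable (J k)"
  shows "(\<integral>\<^sup>+w. f (w k) \<partial>P) = (\<integral>\<^sup>+x. f x \<partial>J k)"
proof -
  have d: "distr P (J k) (\<lambda>w. w k) = J k"
    unfolding others_def by (rule distr_PiM_component) (use k J_prob in auto)
  have m: "(\<lambda>w. w k) \<in> measurable P (J k)" unfolding others_def using k
    by (rule measurable_component_singleton)
  have "(\<integral>\<^sup>+x. f x \<partial>distr P (J k) (\<lambda>w. w k)) = (\<integral>\<^sup>+w. f (w k) \<partial>P)"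
    by (rule nn_integral_distr[OF m]) (simp add: d f)
  then show ?thesis by (simp add: d)
qed

lemma comp_nn_prof:
  assumes k: "k < n" and f: "f \<in> borel_measurable (J k)"
  shows "(\<integral>\<^sup>+w. f (w k) \<partial>profile n m D s) = (\<integral>\<^sup>+x. f x \<partial>J k)"
proof -
  have d: "distr (profile n m D s) (J k) (\<lambda>w. w k) = J k"
    unfolding profile_def by (rule distr_PiM_component) (use k J_prob in auto)
  have m: "(\<lambda>w. w k) \<in> measurable (profile n m D s) (J k)" unfolding profile_def using k
    by (intro measurable_component_singleton) auto
  have "(\<integral>\<^sup>+x. f x \<partial>distr (profile n m D s) (J k) (\<lambda>w. w k)) = (\<integral>\<^sup>+w. f (w k) \<partial>profile n m D s)"
    by (rule nn_integral_distr[OF m]) (simp add: d f)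
  then show ?thesis by (simp add: d)
qed

definition TT :: "nat \<Rightarrow> nat \<Rightarrow> ennreal" where
  "TT k j = (\<integral>\<^sup>+x. ennreal (bval (snd x j)) \<partial>J k)"

lemma TT_meas: "k < n \<Longrightarrow> j < m \<Longrightarrow> (\<lambda>x. ennreal (bval (snd x j))) \<in> borel_measurable (J k)"
  by (intro measurable_compose[OF _ measurable_ennreal] measurable_compose[OF snd_J_meas bval_meas])

lemma h_nn: "j < m \<Longrightarrow> (\<integral>\<^sup>+w. ennreal (h j w) \<partial>P) = (\<Sum>k\<in>K. TT k j)"
proof -
  assume j: "j < m"
  have "(\<integral>\<^sup>+w. ennreal (h j w) \<partial>P) = (\<integral>\<^sup>+w. (\<Sum>k\<in>K. ennreal (bval (snd (w k) j))) \<partial>P)"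
  proof (rule nn_integral_cong)
    fix w assume w: "w \<in> space P"
    show "ennreal (h j w) = (\<Sum>k\<in>K. ennreal (bval (snd (w k) j)))"
      unfolding h_def using bval_nonneg[OF comp_space[OF w _ j]] by (subst sum_ennreal) auto
  qed
  also have "\<dots> = (\<Sum>k\<in>K. \<integral>\<^sup>+w. ennreal (bval (snd (w k) j)) \<partial>P)"
    by (rule nn_integral_sum)
       (use j in \<open>auto intro: measurable_compose[OF _ measurable_ennreal] measurable_compose[OF comp_meas bval_meas]\<close>)
  also have "\<dots> = (\<Sum>k\<in>K. TT k j)"
    unfolding TT_def by (rule sum.cong[OF refl], rule comp_nn_P[where f="\<lambda>x. ennreal (bval (snd x j))"])
      (use j TT_meas in auto)
  finally show ?thesis .
qed

lemma rev_TT: "S \<subseteq> {..<m} \<Longrightarrow> revenue sap_pay n m D s S = (\<Sum>k<n. \<Sum>j\<in>S. TT k j)"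
proof -
  assume S: "S \<subseteq> {..<m}"
  have "\<And>k j. k < n \<Longrightarrow> j \<in> S \<Longrightarrow>
     (\<integral>\<^sup>+w. ennreal (sap_pay j (full_bids n w j) k) \<partial>profile n m D s) = TT k j"
  proof -
    fix k j assume k: "k < n" and j: "j \<in> S"
    have "(\<integral>\<^sup>+w. ennreal (sap_pay j (full_bids n w j) k) \<partial>profile n m D s)
        = (\<integral>\<^sup>+w. ennreal (bval (snd (w k) j)) \<partial>profile n m D s)"
      using k by (simp add: sap_pay_def full_bids_def bval_def)
    also have "\<dots> = TT k j" unfolding TT_def
      by (rule comp_nn_prof[OF k, where f="\<lambda>x. ennreal (bval (snd x j))"]) (use TT_meas k j S in auto)
    finally show "(\<integral>\<^sup>+w. ennreal (sap_pay j (full_bids n w j) k) \<partial>profile n m D s) = TT k j" .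
  qed
  then show ?thesis unfolding revenue_def by (intro sum.cong refl) auto
qed

lemma rev_bound:
  assumes S: "S \<subseteq> {..<m}"
  shows "(\<Sum>j\<in>S. \<integral>\<^sup>+w. ennreal (h j w) \<partial>P) \<le> revenue sap_pay n m D s S"
proof -
  have "(\<Sum>j\<in>S. \<integral>\<^sup>+w. ennreal (h j w) \<partial>P) = (\<Sum>j\<in>S. \<Sum>k\<in>K. TT k j)"
    using S h_nn by (intro sum.cong refl) auto
  also have "\<dots> \<le> (\<Sum>j\<in>S. \<Sum>k<n. TT k j)"
    by (intro sum_mono sum_mono2) auto
  also have "\<dots> = (\<Sum>k<n. \<Sum>j\<in>S. TT k j)" by (rule sum.swap)
  also have "\<dots> = revenue sap_pay n m D s S" using rev_TT[OF S] by simp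
  finally show ?thesis .
qed

end

context sap_setup begin

lemma bval_qd: "j < m \<Longrightarrow> bval (qd e w' j) = h j w' + e"
  by (simp add: qd_def bval_def)

lemma main_ineq:
  fixes v :: "nat \<Rightarrow> 't \<Rightarrow> nat set \<Rightarrow> real" and t :: 't
  assumes S: "S \<subseteq> {..<m}"
    and Vnn: "\<And>A. A \<subseteq> {..<m} \<Longrightarrow> 0 \<le> v i t A"
    and Vmono: "\<And>A B. A \<subseteq> B \<Longrightarrow> B \<subseteq> {..<m} \<Longrightarrow> v i t A \<le> v i t B"
    and Vsub: "\<And>A B. A \<subseteq> {..<m} \<Longrightarrow> B \<subseteq> {..<m} \<Longrightarrow> v i t (A \<union> B) \<le> v i t A + v i t B"
    and tb: "\<And>j H. H \<noteq> {} \<Longrightarrow> tb j H \<in> H"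
  shows "ereal (v i t S / 2) \<le> mu (sap_alloc tb n) sap_pay n m D s v i t S + enn2ereal (revenue sap_pay n m D s S)"
proof -
  interpret Pp: prob_space P by (rule P_prob)
  let ?mu = "mu (sap_alloc tb n) sap_pay n m D s v i t S"
  let ?R = "revenue sap_pay n m D s S"
  define F where "F e w' = (\<integral>w. v i t (won (sap_alloc tb n) n m i (qd e w') w \<inter> S) \<partial>P)" for e w'
  have finS: "finite S" using S finite_subset by blast
  have muge: "ereal (F e w' - (\<Sum>j\<in>S. (h j w' + e))) \<le> ?mu" if e: "0 < e" and w': "w' \<in> space P" for e w'
  proof -
    have q: "qd e w' \<in> space (bid_space m)" using qd_space e w' by simp
    have "exp_util (sap_alloc tb n) sap_pay n m D s v i t (return (bid_space m) (qd e w')) S \<le> ?mu"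
      unfolding mu_def by (rule SUP_upper[OF q])
    moreover have "exp_util (sap_alloc tb n) sap_pay n m D s v i t (return (bid_space m) (qd e w')) S
        = ereal (F e w' - (\<Sum>j\<in>S. (h j w' + e)))"
      unfolding exp_util_return[OF q S] F_def using S
      by (subst sum.cong[OF refl bval_qd]) auto
    ultimately show ?thesis by simp
  qed
  show ?thesis
  proof (cases "?R = \<top>")
    case True
    obtain w0 where w0: "w0 \<in> space P" using Pp.not_empty by blast
    have "ereal (F 1 w0 - (\<Sum>j\<in>S. (h j w0 + 1))) \<le> ?mu" by (rule muge) (use w0 in auto)
    then have "?mu \<noteq> -\<infinity>" by auto
    then show ?thesis using True by (cases ?mu) auto
  next
    case False
    define r where "r = enn2real ?R"
    have r0: "0 \<le> r" unfolding r_def by simp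
    have Rr: "?R = ennreal r" unfolding r_def using False by (simp add: less_top)
    have hle: "(\<Sum>j\<in>S. \<integral>\<^sup>+w. ennreal (h j w) \<partial>P) \<le> ennreal r" using rev_bound[OF S] Rr by simp
    have hfin: "(\<integral>\<^sup>+w. ennreal (h j w) \<partial>P) < \<infinity>" if j: "j \<in> S" for j
    proof -
      have "(\<integral>\<^sup>+w. ennreal (h j w) \<partial>P) \<le> (\<Sum>j\<in>S. \<integral>\<^sup>+w. ennreal (h j w) \<partial>P)"
        by (rule member_le_sum) (use j finS in auto)
      also have "\<dots> \<le> ennreal r" by (rule hle)
      finally show ?thesis by (simp add: le_less_trans)
    qed
    have hint: "integrable P (h j)" if j: "j \<in> S" for j
    proof (rule integrableI_nonneg)
      show "h j \<in> borel_measurable P" using h_meas j S by auto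
      show "AE x in P. 0 \<le> h j x" using h_nonneg j S by (intro AE_I2) auto
      show "(\<integral>\<^sup>+x. ennreal (h j x) \<partial>P) < \<infinity>" by (rule hfin[OF j])
    qed
    have hsum: "(\<Sum>j\<in>S. integral\<^sup>L P (h j)) \<le> r"
    proof -
      have "(\<Sum>j\<in>S. \<integral>\<^sup>+w. ennreal (h j w) \<partial>P) = (\<Sum>j\<in>S. ennreal (integral\<^sup>L P (h j)))"
        using hint h_nonneg S by (intro sum.cong refl nn_integral_eq_integral AE_I2) auto
      also have "\<dots> = ennreal (\<Sum>j\<in>S. integral\<^sup>L P (h j))"
        using hint h_nonneg S
        by (intro sum_ennreal Bochner_Integration.integral_nonneg) auto
      finally show ?thesis using hle r0 by simp
    qed
    have eps: "ereal (v i t S / 2) \<le> ?mu + ereal r + ereal \<delta>" if d: "0 < \<delta>" for \<delta>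
    proof -
      define e where "e = \<delta> / (2 * (real (card S) + 1))"
      have e0: "0 < e" unfolding e_def using d by simp
      have ce: "real (card S) * e \<le> \<delta> / 2"
      proof -
        have "real (card S) * e = \<delta> / 2 * (real (card S) / (real (card S) + 1))"
          unfolding e_def by (simp add: field_simps)
        also have "\<dots> \<le> \<delta> / 2 * 1" using d by (intro mult_left_mono) auto
        finally show ?thesis by simp
      qed
      define \<Phi> where "\<Phi> w' = F e w' - (\<Sum>j\<in>S. (h j w' + e))" for w'
      have Fint: "integrable P (F e)" and Fge: "v i t S / 2 \<le> integral\<^sup>L P (F e)"
        unfolding F_def using avg[OF S e0, of "v i t"] Vnn Vmono Vsub tb by auto
      have Sint: "integrable P (\<lambda>w'. \<Sum>j\<in>S. (h j w' + e))" using hint by auto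
      have "integral\<^sup>L P \<Phi> = integral\<^sup>L P (F e) - integral\<^sup>L P (\<lambda>w'. \<Sum>j\<in>S. (h j w' + e))"
        unfolding \<Phi>_def by (rule Bochner_Integration.integral_diff[OF Fint Sint])
      also have "integral\<^sup>L P (\<lambda>w'. \<Sum>j\<in>S. (h j w' + e)) = (\<Sum>j\<in>S. integral\<^sup>L P (h j) + e)"
        using hint by (subst Bochner_Integration.integral_sum) (auto simp: Pp.prob_space)
      also have "\<dots> = (\<Sum>j\<in>S. integral\<^sup>L P (h j)) + real (card S) * e"
        by (simp add: sum.distrib)
      finally have Phi_int: "integral\<^sup>L P \<Phi> \<ge> v i t S / 2 - r - \<delta> / 2"
        using Fge hsum ce by linarith
      have Phiint: "integrable P \<Phi>" unfolding \<Phi>_def using Fint Sint by auto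
      have "\<exists>w'\<in>space P. v i t S / 2 - r - \<delta> \<le> \<Phi> w'"
      proof (rule ccontr)
        assume "\<not> ?thesis"
        then have lt: "\<And>w'. w' \<in> space P \<Longrightarrow> \<Phi> w' \<le> v i t S / 2 - r - \<delta>" by force
        have "integral\<^sup>L P \<Phi> \<le> integral\<^sup>L P (\<lambda>_. v i t S / 2 - r - \<delta>)"
          by (rule integral_mono[OF Phiint]) (use lt in auto)
        then have "integral\<^sup>L P \<Phi> \<le> v i t S / 2 - r - \<delta>" by (simp add: Pp.prob_space)
        then show False using Phi_int d by linarith
      qed
      then obtain w' where w': "w' \<in> space P" and ge: "v i t S / 2 - r - \<delta> \<le> \<Phi> w'" by blast
      have "ereal (v i t S / 2 - r - \<delta>) \<le> ?mu"
        using muge[OF e0 w'] ge unfolding \<Phi>_def by (meson ereal_less_eq(3) order_trans)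
      then have "ereal (v i t S / 2 - r - \<delta>) + ereal r + ereal \<delta> \<le> ?mu + ereal r + ereal \<delta>"
        by (intro add_right_mono)
      then show ?thesis by simp
    qed
    have "ereal (v i t S / 2) \<le> ?mu + ereal r"
      by (rule ereal_le_epsilon2) (use eps in simp)
    then show ?thesis using Rr r0 by simp
  qed
qed

end

theorem lemma2:
  fixes n m :: nat
    and D :: "nat \<Rightarrow> 't measure"
    and v :: "nat \<Rightarrow> 't \<Rightarrow> nat set \<Rightarrow> real"
    and s :: "nat \<Rightarrow> 't \<Rightarrow> bidvec measure"
    and tb :: "nat \<Rightarrow> nat set \<Rightarrow> nat"
  assumes tie_break: "\<And>j H. H \<noteq> {} \<Longrightarrow> tb j H \<in> H"
    and nonneg: "\<And>i t S. i < n \<Longrightarrow> t \<in> space (D i) \<Longrightarrow> S \<subseteq> {..<m} \<Longrightarrow> v i t S \<ge> 0"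
    and monotone: "\<And>i t S T. i < n \<Longrightarrow> t \<in> space (D i) \<Longrightarrow> S \<subseteq> T \<Longrightarrow> T \<subseteq> {..<m}
                     \<Longrightarrow> v i t S \<le> v i t T"
    and subadditive: "\<And>i t S T. i < n \<Longrightarrow> t \<in> space (D i) \<Longrightarrow> S \<subseteq> {..<m} \<Longrightarrow> T \<subseteq> {..<m}
                     \<Longrightarrow> v i t (S \<union> T) \<le> v i t S + v i t T"
    and equilibrium: "BNE (sap_alloc tb n) sap_pay n m D s v"
  shows "c_efficient (1/2) (sap_alloc tb n) sap_pay n m D s v"
proof -
  have vs: "valid_setting n m D s" using equilibrium by (simp add: BNE_def)
  have p1: "\<forall>j<m. \<forall>bb k. (\<forall>k' x. bb k' = Some x \<longrightarrow> x \<ge> 0) \<longrightarrow>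
      (sap_pay j bb k \<ge> 0 \<and> (bb k = None \<longrightarrow> sap_pay j bb k = 0))"
  proof (intro allI impI)
    fix j k :: nat and bb :: "nat \<Rightarrow> real option" assume "\<forall>k' x. bb k' = Some x \<longrightarrow> x \<ge> 0"
    then show "sap_pay j bb k \<ge> 0 \<and> (bb k = None \<longrightarrow> sap_pay j bb k = 0)"
      by (cases "bb k") (auto simp: sap_pay_def)
  qed
  have p2: "\<forall>j<m. \<forall>bb. highest n bb \<noteq> {} \<longrightarrow> (\<exists>k\<in>highest n bb. sap_alloc tb n j bb = Some k)"
  proof (intro allI impI)
    fix j :: nat and bb :: "nat \<Rightarrow> real option" assume "highest n bb \<noteq> {}"
    then show "\<exists>k\<in>highest n bb. sap_alloc tb n j bb = Some k"
      using tie_break[of "highest n bb" j] by (auto simp: sap_alloc_def)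
  qed
  have p3: "\<forall>i<n. \<forall>t\<in>space (D i). \<forall>S\<subseteq>{..<m}.
        mu (sap_alloc tb n) sap_pay n m D s v i t S + enn2ereal (revenue sap_pay n m D s S) \<ge> ereal (1/2 * v i t S)"
  proof (intro allI impI ballI)
    fix i t S assume i: "i < n" and t: "t \<in> space (D i)" and S: "S \<subseteq> {..<m}"
    interpret sap_setup n m D s i by unfold_locales (use vs i in auto)
    have "ereal (v i t S / 2) \<le> mu (sap_alloc tb n) sap_pay n m D s v i t S + enn2ereal (revenue sap_pay n m D s S)"
      by (rule main_ineq[OF S]) (use nonneg monotone subadditive tie_break i t in auto)
    then show "mu (sap_alloc tb n) sap_pay n m D s v i t S + enn2ereal (revenue sap_pay n m D s S) \<ge> ereal (1/2 * v i t S)"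
      by simp
  qed
  show ?thesis unfolding c_efficient_def using p1 p2 p3 by blast
qed

end
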